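(* Let $k\ge 1$ and consider $k$ linear constraints $\mathcal{C}_i[y]=\kappa_i$, $i=1,\dots,k$, on $y:\mathbb{R}\to\mathbb{R}$, with $\kappa_i\in\mathbb{R}$. Let $s_1,\dots,s_k$ be linearly independent support functions with invertible support matrix $\mathbb{S}_{ij}=\mathcal{C}_i[s_j]$, $\alpha=\mathbb{S}^{-1}$, switching functions $\phi_j(x)=\sum_m s_m(x)\alpha_{mj}$, projection functionals $\rho_j(x,g(x))=\kappa_j-\mathcal{C}_j[g]$, and constrained expression $y(x,g(x))=g(x)+\sum_{j}\phi_j(x)\rho_j(x,g(x))$. Then for a given function $f$ satisfying the constraints, the free function $g$ such that $y(x,g(x))=f(x)$ is not unique. In other words, the constrained expression is not an injective functional from the set of all free functions to the set of all functions satisfying the constraints.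
   Context: Each $\mathcal{C}_i$ is a linear operator returning the operand function evaluated in the same way as the dependent variable appears in the $i$-th constraint (combinations of values, derivatives and integrals of the function). A free function is any $g:\mathbb{R}\to\mathbb{R}$ for which all $\mathcal{C}_i[g]$ are defined. A function $f$ satisfies the constraints if $\mathcal{C}_i[f]=\kappa_i$ for all $i$. *)

theory Defs
  imports "HOL-Analysis.Analysis"
begin

text \<open>The constraints are indexed by a finite type 'k (so k = CARD('k) \<ge> 1).
  D is the set of free functions (those on which every C i is defined);
  it is a linear space of functions, and each C i is linear on D.\<close>

definition fun_subspace :: "(real \<Rightarrow> real) set \<Rightarrow> bool" where
  "fun_subspace D \<longleftrightarrow> (\<lambda>x. 0) \<in> D \<and>
     (\<forall>g\<in>D. \<forall>h\<in>D. \<forall>a b. (\<lambda>x. a * g x + b * h x) \<in> D)"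

definition linear_on_funs :: "(real \<Rightarrow> real) set \<Rightarrow> ((real \<Rightarrow> real) \<Rightarrow> real) \<Rightarrow> bool" where
  "linear_on_funs D L \<longleftrightarrow>
     (\<forall>g\<in>D. \<forall>h\<in>D. \<forall>a b. L (\<lambda>x. a * g x + b * h x) = a * L g + b * L h)"

definition lin_indep_funs :: "('k::finite \<Rightarrow> real \<Rightarrow> real) \<Rightarrow> bool" where
  "lin_indep_funs s \<longleftrightarrow>
     (\<forall>c :: 'k \<Rightarrow> real. (\<forall>x. (\<Sum>j\<in>UNIV. c j * s j x) = 0) \<longrightarrow> (\<forall>j. c j = 0))"

definition support_matrix ::
  "('k::finite \<Rightarrow> (real \<Rightarrow> real) \<Rightarrow> real) \<Rightarrow> ('k \<Rightarrow> real \<Rightarrow> real) \<Rightarrow> real^'k^'k" where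
  "support_matrix C s = (\<chi> i j. C i (s j))"

definition switching ::
  "('k::finite \<Rightarrow> (real \<Rightarrow> real) \<Rightarrow> real) \<Rightarrow> ('k \<Rightarrow> real \<Rightarrow> real) \<Rightarrow> 'k \<Rightarrow> real \<Rightarrow> real" where
  "switching C s j x = (\<Sum>m\<in>UNIV. s m x * (matrix_inv (support_matrix C s)) $ m $ j)"

definition projection ::
  "('k::finite \<Rightarrow> (real \<Rightarrow> real) \<Rightarrow> real) \<Rightarrow> ('k \<Rightarrow> real) \<Rightarrow> 'k \<Rightarrow> (real \<Rightarrow> real) \<Rightarrow> real" where
  "projection C \<kappa> j g = \<kappa> j - C j g"

definition constrained_expr ::
  "('k::finite \<Rightarrow> (real \<Rightarrow> real) \<Rightarrow> real) \<Rightarrow> ('k \<Rightarrow> real \<Rightarrow> real) \<Rightarrow> ('k \<Rightarrow> real)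
     \<Rightarrow> (real \<Rightarrow> real) \<Rightarrow> real \<Rightarrow> real" where
  "constrained_expr C s \<kappa> g x = g x + (\<Sum>j\<in>UNIV. switching C s j x * projection C \<kappa> j g)"

end

theory Submission
  imports Defs
begin

theorem theorem3:
  fixes D :: "(real \<Rightarrow> real) set"
    and C :: "'k::finite \<Rightarrow> (real \<Rightarrow> real) \<Rightarrow> real"
    and s :: "'k \<Rightarrow> real \<Rightarrow> real"
    and \<kappa> :: "'k \<Rightarrow> real"
    and f :: "real \<Rightarrow> real"
  assumes "fun_subspace D"
    and "\<And>i. linear_on_funs D (C i)"
    and "\<And>j. s j \<in> D"
    and "lin_indep_funs s"
    and "invertible (support_matrix C s)"
    and "f \<in> D"
    and "\<And>i. C i f = \<kappa> i"
  shows "\<exists>g1\<in>D. \<exists>g2\<in>D. g1 \<noteq> g2 \<and>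
           constrained_expr C s \<kappa> g1 = f \<and> constrained_expr C s \<kappa> g2 = f"
proof -
  obtain a :: 'k where True by simp
  define S where "S = support_matrix C s"
  define \<alpha> where "\<alpha> = matrix_inv S"
  have inv: "\<alpha> ** S = mat 1" using assms(5) unfolding \<alpha>_def S_def
    using someI_ex[OF assms(5)[unfolded invertible_def]] by (simp add: matrix_inv_def)
  define g2 where "g2 = (\<lambda>x. 1 * f x + 1 * s a x)"
  have g2D: "g2 \<in> D" using assms(1,3,6) unfolding g2_def fun_subspace_def by blast
  have Cg2: "C j g2 = \<kappa> j + S $ j $ a" for j
  proof -
    have "C j (\<lambda>x. 1 * f x + 1 * s a x) = 1 * C j f + 1 * C j (s a)"
      using assms(2)[of j] assms(3,6) unfolding linear_on_funs_def by blast
    thus ?thesis using assms(7) unfolding g2_def S_def support_matrix_def by simp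
  qed
  have sa: "s a \<noteq> (\<lambda>x. 0)"
  proof
    assume h: "s a = (\<lambda>x. 0)"
    have "\<forall>x. (\<Sum>j\<in>UNIV. (if j = a then 1 else 0) * s j x) = 0"
    proof
      fix x
      have "(\<Sum>j\<in>UNIV. (if j = a then 1 else 0) * s j x) = (\<Sum>j\<in>UNIV. if j = a then s a x else 0)"
        by (rule sum.cong) auto
      also have "\<dots> = 0" using h by simp
      finally show "(\<Sum>j\<in>UNIV. (if j = a then 1 else 0) * s j x) = 0" .
    qed
    with assms(4)[unfolded lin_indep_funs_def, rule_format, of "\<lambda>j. if j = a then 1 else 0"] have "(if a = a then (1::real) else 0) = 0" by blast
    thus False by simp
  qed
  have ne: "f \<noteq> g2"
  proof
    assume "f = g2"
    hence "\<forall>x. f x = f x + s a x" unfolding g2_def by (simp add: fun_eq_iff)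
    hence "\<forall>x. s a x = 0" by simp
    thus False using sa by auto
  qed
  have e1: "constrained_expr C s \<kappa> f = f"
    unfolding constrained_expr_def projection_def using assms(7) by simp
  have e2: "constrained_expr C s \<kappa> g2 = f"
  proof
    fix x
    have "(\<Sum>j\<in>UNIV. switching C s j x * projection C \<kappa> j g2)
        = - (\<Sum>j\<in>UNIV. \<Sum>m\<in>UNIV. s m x * (\<alpha> $ m $ j * S $ j $ a))"
      unfolding switching_def projection_def Cg2 \<alpha>_def S_def
      by (simp add: sum_distrib_right sum_negf mult.assoc)
    also have "\<dots> = - (\<Sum>m\<in>UNIV. s m x * (\<Sum>j\<in>UNIV. \<alpha> $ m $ j * S $ j $ a))"
      by (subst sum.swap) (simp add: sum_distrib_left)
    also have "\<dots> = - (\<Sum>m\<in>UNIV. s m x * (\<alpha> ** S) $ m $ a)"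
      by (simp add: matrix_matrix_mult_def)
    also have "\<dots> = - s a x"
      unfolding inv by (simp add: mat_def if_distrib cong: if_cong)
    finally show "constrained_expr C s \<kappa> g2 x = f x"
      unfolding constrained_expr_def by (simp add: g2_def)
  qed
  show ?thesis using e1 e2 ne g2D assms(6) by blast
qed

end
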